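(* Let $n\ge2$, $f\in C^n(\mathbb{R})$ and $\xi\in\mathbb{R}$. Let $2\le\kappa\le n$, let $\alpha=(\alpha_0,\dots,\alpha_\kappa)\in\mathbb{N}_{\ge0}^{\kappa+1}$ with $|\alpha|=\alpha_0+\dots+\alpha_\kappa\le n+1$, and let $(\lambda_0,\dots,\lambda_\kappa)\in\mathbb{R}^{\kappa+1}$ be such that for some $i\ne j$ we have $\lambda_i\ne\lambda_j$ and $\alpha_i,\alpha_j>0$. Then \begin{align*} f[\lambda_i^{(\alpha_i)},\lambda_j^{(\alpha_j)},\widetilde\lambda^{(\widetilde\alpha)}] =&\sum_{l=0}^{\alpha_i-1}\binom{\alpha_j+l-1}{l}\Big(\frac{\lambda_i-\xi}{\lambda_i-\lambda_j}\Big)^{\alpha_j}\Big(\frac{\xi-\lambda_j}{\lambda_i-\lambda_j}\Big)^{l} f[\lambda_i^{(\alpha_i-l)},\xi^{(\alpha_j+l)},\widetilde\lambda^{(\widetilde\alpha)}]\\ &+\sum_{l=0}^{\alpha_j-1}\binom{\alpha_i+l-1}{l}\Big(\frac{\lambda_i-\xi}{\lambda_i-\lambda_j}\Big)^{l}\Big(\frac{\xi-\lambda_j}{\lambda_i-\lambda_j}\Big)^{\alpha_i} f[\xi^{(\alpha_i+l)},\lambda_j^{(\alpha_j-l)},\widetilde\lambda^{(\widetilde\alpha)}], \end{align*} where $\widetilde\lambda^{(\widetilde\alpha)}$ denotes the list of the remaining variables $\lambda_m^{(\alpha_m)}$, $m\in\{0,\dots,\kappa\}\setminus\{i,j\}$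.
   Context: Divided differences: for $f\in C^n(\mathbb{R})$ set $f^{[0]}=f$ and for $1\le k\le n$, $f^{[k]}(\lambda_0,\lambda_1,\lambda)=\frac{f^{[k-1]}(\lambda_0,\lambda)-f^{[k-1]}(\lambda_1,\lambda)}{\lambda_0-\lambda_1}$ if $\lambda_0\ne\lambda_1$, and $=\frac{d}{d\mu}f^{[k-1]}(\mu,\lambda)|_{\mu=\lambda_0}$ if $\lambda_0=\lambda_1$ ($\lambda\in\mathbb{R}^{k-1}$); these are symmetric in their arguments. Notation with repeated variables: for reals $\mu_0,\dots,\mu_m$ and nonnegative integers $\beta_0,\dots,\beta_m$ with $N:=\beta_0+\dots+\beta_m\ge1$, $f[\mu_0^{(\beta_0)},\dots,\mu_m^{(\beta_m)}]:=f^{[N-1]}(\mu_0,\dots,\mu_0,\dots,\mu_m,\dots,\mu_m)$ where $\mu_r$ is repeated $\beta_r$ times (entries with multiplicity $0$ are omitted). *)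

theory Defs
  imports "HOL-Analysis.Analysis"
begin

definition C_n :: "nat \<Rightarrow> (real \<Rightarrow> real) \<Rightarrow> bool" where
  "C_n n f \<longleftrightarrow> (\<forall>k<n. \<forall>x. ((deriv ^^ k) f) differentiable (at x))
                 \<and> continuous_on UNIV ((deriv ^^ n) f)"

fun dd :: "(real \<Rightarrow> real) \<Rightarrow> real list \<Rightarrow> real" where
  "dd f [] = 0"
| "dd f [x] = f x"
| "dd f (x0 # x1 # xs) =
     (if x0 \<noteq> x1 then (dd f (x0 # xs) - dd f (x1 # xs)) / (x0 - x1)
      else deriv (\<lambda>\<mu>. dd f (\<mu> # xs)) x0)"

definition ddm :: "(real \<Rightarrow> real) \<Rightarrow> (real \<times> nat) list \<Rightarrow> real" where
  "ddm f ps = dd f (concat (map (\<lambda>(\<mu>, b). replicate b \<mu>) ps))"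

definition rest :: "nat \<Rightarrow> (nat \<Rightarrow> real) \<Rightarrow> (nat \<Rightarrow> nat) \<Rightarrow> nat \<Rightarrow> nat \<Rightarrow> (real \<times> nat) list" where
  "rest \<kappa> lam \<alpha> i j = map (\<lambda>m. (lam m, \<alpha> m)) (filter (\<lambda>m. m \<noteq> i \<and> m \<noteq> j) [0..<Suc \<kappa>])"

end

theory Submission
  imports Defs
begin

definition DD1 :: "(real \<Rightarrow> real) \<Rightarrow> real \<Rightarrow> real \<Rightarrow> real" where
  "DD1 g x y = (if x \<noteq> y then (g x - g y) / (x - y) else deriv g x)"

definition smooth :: "nat \<Rightarrow> (real \<Rightarrow> real) \<Rightarrow> bool" where
  "smooth k g \<longleftrightarrow> (\<exists>D. D 0 = g \<and> (\<forall>j<k. \<forall>x. (D j has_real_derivative D (Suc j) x) (at x))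
      \<and> continuous_on UNIV (D k))"

lemma smooth_cont:
  assumes "\<forall>j<k. \<forall>x. (D j has_real_derivative D (Suc j) x) (at x)" "continuous_on UNIV (D k)" "m \<le> k"
  shows "continuous_on UNIV (D m)"
proof (cases "m = k")
  case True then show ?thesis using assms by simp
next
  case False
  then have "m < k" using assms by simp
  then have "\<forall>x. isCont (D m) x" using assms(1) DERIV_isCont by blast
  then show ?thesis by (simp add: continuous_at_imp_continuous_on)
qed

lemma smooth_DD1:
  assumes D0: "D 0 = g" and Dd: "\<forall>j<Suc k. \<forall>x. (D j has_real_derivative D (Suc j) x) (at x)"
    and Dc: "continuous_on UNIV (D (Suc k))"
  shows "smooth k (\<lambda>\<mu>. DD1 g \<mu> y)"
proof -
  have cont: "continuous_on UNIV (D m)" if "m \<le> Suc k" for m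
    using smooth_cont[OF Dd Dc that] .
  define E where "E j \<mu> = integral (cbox 0 1) (\<lambda>t::real. t ^ j * D (Suc j) (y + t * (\<mu> - y)))" for j \<mu>
  have contE: "continuous_on (UNIV \<times> cbox 0 1) (\<lambda>(\<mu>, t::real). t ^ j * D (Suc j) (y + t * (\<mu> - y)))"
    if "j \<le> k" for j
  proof -
    have c: "continuous_on UNIV (D (Suc j))" using cont that by simp
    have "continuous_on (UNIV \<times> cbox 0 1) (\<lambda>p::real\<times>real. D (Suc j) (y + snd p * (fst p - y)))"
      by (rule continuous_on_compose2[OF c]) (auto intro!: continuous_intros)
    then have "continuous_on (UNIV \<times> cbox 0 1) (\<lambda>p::real\<times>real. snd p ^ j * D (Suc j) (y + snd p * (fst p - y)))"
      by (auto intro!: continuous_intros)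
    then show ?thesis by (simp add: case_prod_beta)
  qed
  have E0: "E 0 = (\<lambda>\<mu>. DD1 g \<mu> y)"
  proof
    fix \<mu>
    show "E 0 \<mu> = DD1 g \<mu> y"
    proof (cases "\<mu> = y")
      case True
      have "deriv g y = D 1 y" using Dd D0 DERIV_imp_deriv by fastforce
      then show ?thesis using True by (simp add: E_def DD1_def)
    next
      case False
      have "((\<lambda>t. (\<mu> - y) * D 1 (y + t * (\<mu> - y))) has_integral
             (g (y + 1 * (\<mu> - y)) - g (y + 0 * (\<mu> - y)))) {0..1}"
      proof (rule fundamental_theorem_of_calculus)
        fix t :: real assume "t \<in> {0..1}"
        have "(g has_real_derivative D 1 (y + t * (\<mu> - y))) (at (y + t * (\<mu> - y)))"
          using Dd D0 by fastforce
        then have "((\<lambda>t. g (y + t * (\<mu> - y))) has_real_derivative D 1 (y + t * (\<mu> - y)) * (\<mu> - y)) (at t)"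
          by (auto intro!: derivative_eq_intros DERIV_chain2[where f=g])
        then show "((\<lambda>t. g (y + t * (\<mu> - y))) has_vector_derivative (\<mu> - y) * D 1 (y + t * (\<mu> - y))) (at t within {0..1})"
          by (simp add: has_real_derivative_iff_has_vector_derivative[symmetric] mult.commute has_field_derivative_at_within)
      qed simp
      then have "((\<lambda>t. (1/(\<mu> - y)) * ((\<mu> - y) * D 1 (y + t * (\<mu> - y)))) has_integral (1/(\<mu> - y)) * (g \<mu> - g y)) {0..1}"
        by (intro has_integral_mult_right) simp
      moreover have "\<And>t. (1/(\<mu> - y)) * ((\<mu> - y) * D 1 (y + t * (\<mu> - y))) = D 1 (y + t * (\<mu> - y))"
        using False by simp
      ultimately have "((\<lambda>t. D 1 (y + t * (\<mu> - y))) has_integral (g \<mu> - g y) / (\<mu> - y)) {0..1}"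
        by simp
      then show ?thesis using False by (simp add: E_def DD1_def integral_unique)
    qed
  qed
  have Ed: "(E j has_real_derivative E (Suc j) x) (at x)" if "j < k" for j x
  proof -
    have "((\<lambda>\<mu>. integral (cbox 0 1) (\<lambda>t::real. t ^ j * D (Suc j) (y + t * (\<mu> - y)))) has_field_derivative
        integral (cbox 0 1) (\<lambda>t. t ^ Suc j * D (Suc (Suc j)) (y + t * (x - y)))) (at x within UNIV)"
    proof (rule leibniz_rule_field_derivative[where fx="\<lambda>\<mu> t. t ^ Suc j * D (Suc (Suc j)) (y + t * (\<mu> - y))"])
      fix \<mu> t :: real
      have d: "(D (Suc j) has_real_derivative D (Suc (Suc j)) (y + t * (\<mu> - y))) (at (y + t * (\<mu> - y)))"
        using Dd that by simp
      show "((\<lambda>\<mu>. t ^ j * D (Suc j) (y + t * (\<mu> - y))) has_field_derivative t ^ Suc j * D (Suc (Suc j)) (y + t * (\<mu> - y))) (at \<mu> within UNIV)"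
      proof -
        have i: "((\<lambda>\<mu>. y + t * (\<mu> - y)) has_real_derivative t) (at \<mu>)"
          by (auto intro!: derivative_eq_intros)
        have "((\<lambda>\<mu>. D (Suc j) (y + t * (\<mu> - y))) has_real_derivative D (Suc (Suc j)) (y + t * (\<mu> - y)) * t) (at \<mu>)"
          by (rule DERIV_chain2[OF d i])
        then have "((\<lambda>\<mu>. t ^ j * D (Suc j) (y + t * (\<mu> - y))) has_real_derivative t ^ j * (D (Suc (Suc j)) (y + t * (\<mu> - y)) * t)) (at \<mu>)"
          by (rule DERIV_cmult)
        then show ?thesis by (simp add: algebra_simps)
      qed
    next
      fix \<mu> :: real
      show "(\<lambda>t. t ^ j * D (Suc j) (y + t * (\<mu> - y))) integrable_on cbox 0 1"
      proof -
        have c: "continuous_on UNIV (D (Suc j))" using cont[of "Suc j"] that by simp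
        have "continuous_on (cbox 0 1) (\<lambda>t. D (Suc j) (y + t * (\<mu> - y)))"
          by (rule continuous_on_compose2[OF c]) (auto intro!: continuous_intros)
        then have "continuous_on (cbox 0 1) (\<lambda>t. t ^ j * D (Suc j) (y + t * (\<mu> - y)))"
          by (intro continuous_on_mult continuous_on_power continuous_on_id)
        then show ?thesis by (rule integrable_continuous)
      qed
    next
      show "continuous_on (UNIV \<times> cbox 0 1) (\<lambda>(\<mu>, t). t ^ Suc j * D (Suc (Suc j)) (y + t * (\<mu> - y)))"
        using contE[of "Suc j"] that by simp
    qed auto
    then show ?thesis unfolding E_def[abs_def] by simp
  qed
  have Ec: "continuous_on UNIV (E k)"
    unfolding E_def[abs_def] by (rule integral_continuous_on_param) (use contE[of k] in simp)
  show ?thesis unfolding smooth_def using E0 Ed Ec by blast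
qed

lemma dd_cons2: "dd f (x # y # T) = DD1 (\<lambda>\<mu>. dd f (\<mu> # T)) x y"
  by (simp add: DD1_def)

lemma smooth_Suc_DD1: "smooth (Suc k) g \<Longrightarrow> smooth k (\<lambda>\<mu>. DD1 g \<mu> y)"
  unfolding smooth_def[of "Suc k"] using smooth_DD1 by blast

lemma smooth_deriv: assumes "smooth (Suc k) g" shows "(g has_real_derivative deriv g x) (at x)"
proof -
  obtain D where "D 0 = g" "\<forall>j<Suc k. \<forall>x. (D j has_real_derivative D (Suc j) x) (at x)"
    using assms unfolding smooth_def by blast
  then have "(g has_real_derivative D 1 x) (at x)" by fastforce
  then show ?thesis using DERIV_imp_deriv by metis
qed

lemma smooth_dd: "smooth n f \<Longrightarrow> length T \<le> n \<Longrightarrow> smooth (n - length T) (\<lambda>\<mu>. dd f (\<mu> # T))"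
proof (induction T)
  case Nil
  then show ?case by simp
next
  case (Cons x T)
  then have sm: "smooth (Suc (n - length (x # T))) (\<lambda>\<mu>. dd f (\<mu> # T))"
    by (simp add: Suc_diff_Suc)
  have e: "(\<lambda>\<mu>. dd f (\<mu> # x # T)) = (\<lambda>\<mu>. DD1 (\<lambda>\<mu>. dd f (\<mu> # T)) \<mu> x)" by (simp only: dd_cons2)
  from smooth_Suc_DD1[OF sm, of x] show ?case unfolding e .
qed

lemma Cn_smooth: assumes "C_n n f" shows "smooth n f"
  unfolding smooth_def
proof (intro exI conjI allI impI)
  show "(deriv ^^ 0) f = f" by simp
  show "continuous_on UNIV ((deriv ^^ n) f)" using assms by (simp add: C_n_def)
  fix j x assume "j < n"
  then have "(deriv ^^ j) f differentiable (at x)" using assms by (simp add: C_n_def)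
  then show "((deriv ^^ j) f has_real_derivative (deriv ^^ Suc j) f x) (at x)"
    using DERIV_deriv_iff_real_differentiable by simp
qed

lemma swap0: "dd f (x # y # T) = dd f (y # x # T)"
  by (cases "x = y") (auto simp: field_simps)

lemma dd_conf: "dd f (x # x # T) = deriv (\<lambda>\<mu>. dd f (\<mu> # T)) x"
  by (subst dd.simps(3)) simp

lemma dd_dist: "x \<noteq> y \<Longrightarrow> dd f (x # y # T) = (dd f (x # T) - dd f (y # T)) / (x - y)"
  by (subst dd.simps(3)) simp

lemma hlp:
  assumes hd: "((\<lambda>\<mu>. dd f (\<mu> # T)) has_real_derivative deriv (\<lambda>\<mu>. dd f (\<mu> # T)) x) (at x)"
    and xz: "x \<noteq> z"
  shows "dd f (x # x # z # T) = (dd f (x # x # T) - dd f (z # x # T)) / (x - z)"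
proof -
  define G where "G = (\<lambda>\<mu>. dd f (\<mu> # T))"
  have hG: "(G has_real_derivative deriv G x) (at x)" using hd by (simp add: G_def)
  have q: "((\<lambda>\<mu>. (G \<mu> - G z) / (\<mu> - z)) has_real_derivative
      ((deriv G x - 0) * (x - z) - ((1 - 0) * (G x - G z))) / ((x - z) ^ Suc (Suc 0))) (at x)"
    by (rule DERIV_quotient[OF DERIV_diff[OF hG DERIV_const] DERIV_diff[OF DERIV_ident DERIV_const]])
       (use xz in simp)
  have "((\<lambda>\<mu>. dd f (\<mu> # z # T)) has_real_derivative
      ((deriv G x - 0) * (x - z) - ((1 - 0) * (G x - G z))) / ((x - z) ^ Suc (Suc 0))) (at x)"
    by (rule has_field_derivative_transform_within_open[OF q, of "-{z}"])
       (use xz in \<open>auto simp: G_def dd_dist\<close>)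
  then have "dd f (x # x # z # T) = ((deriv G x - 0) * (x - z) - ((1 - 0) * (G x - G z))) / ((x - z) ^ Suc (Suc 0))"
    by (simp add: dd_conf DERIV_imp_deriv)
  also have "\<dots> = (deriv G x - (G x - G z) / (x - z)) / (x - z)"
  proof -
    have "x - z \<noteq> 0" using xz by simp
    then show ?thesis by (simp add: field_simps power2_eq_square)
  qed
  also have "\<dots> = (dd f (x # x # T) - dd f (z # x # T)) / (x - z)"
  proof -
    have sw: "(G z - G x) / (z - x) = (G x - G z) / (x - z)"
      by (metis minus_diff_eq minus_divide_divide)
    show ?thesis using xz sw by (simp add: G_def dd_conf dd_dist)
  qed
  finally show ?thesis .
qed

lemma alg3: "(x0::real) \<noteq> x1 \<Longrightarrow> x0 \<noteq> x2 \<Longrightarrow> x1 \<noteq> x2 \<Longrightarrow> ((g0 - g2) / (x0 - x2) - (g1 - g2) / (x1 - x2)) / (x0 - x1) = ((g0 - g1) / (x0 - x1) - (g2 - g1) / (x2 - x1)) / (x0 - x2)"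
proof -
  assume a: "x0 \<noteq> x1" "x0 \<noteq> x2" "x1 \<noteq> x2"
  then have b: "x0 - x1 \<noteq> 0" "x0 - x2 \<noteq> 0" "x1 - x2 \<noteq> 0" "x2 - x1 \<noteq> 0" by auto
  have l: "((g0 - g2) / (x0 - x2) - (g1 - g2) / (x1 - x2)) / (x0 - x1) = ((g0 - g2)*(x1-x2) - (g1-g2)*(x0-x2)) / ((x0-x2)*(x1-x2)*(x0-x1))"
    using b by (simp add: diff_frac_eq)
  have r: "((g0 - g1) / (x0 - x1) - (g2 - g1) / (x2 - x1)) / (x0 - x2) = ((g0-g1)*(x2-x1) - (g2-g1)*(x0-x1)) / ((x0-x1)*(x2-x1)*(x0-x2))"
    using b by (simp add: diff_frac_eq)
  have n: "((g0-g1)*(x2-x1) - (g2-g1)*(x0-x1)) = - ((g0 - g2)*(x1-x2) - (g1-g2)*(x0-x2))" by algebra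
  have d: "((x0-x1)*(x2-x1)*(x0-x2)) = - ((x0-x2)*(x1-x2)*(x0-x1))" by algebra
  show ?thesis unfolding l r n d by (rule minus_divide_divide[symmetric])
qed

lemma swap1:
  assumes sm: "smooth n f" and len: "length T + 3 \<le> n + 1"
  shows "dd f (x0 # x1 # x2 # T) = dd f (x0 # x2 # x1 # T)"
proof -
  have "smooth (Suc (n - length T - 1)) (\<lambda>\<mu>. dd f (\<mu> # T))"
    using smooth_dd[OF sm, of T] len by (simp add: Suc_diff_Suc)
  then have hd: "\<And>x. ((\<lambda>\<mu>. dd f (\<mu> # T)) has_real_derivative deriv (\<lambda>\<mu>. dd f (\<mu> # T)) x) (at x)"
    by (rule smooth_deriv)
  show ?thesis
  proof (cases "x1 = x2")
    case True then show ?thesis by simp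
  next
    case n12: False
    show ?thesis
    proof (cases "x0 = x1")
      case True
      then have "x0 \<noteq> x2" using n12 by simp
      then show ?thesis using True hlp[OF hd] by (simp add: dd_dist)
    next
      case n01: False
      show ?thesis
      proof (cases "x0 = x2")
        case True
        then show ?thesis using n01 hlp[OF hd] by (simp add: dd_dist)
      next
        case n02: False
        define G where "G = (\<lambda>\<mu>. dd f (\<mu> # T))"
        have "dd f (x0 # x1 # x2 # T) = ((G x0 - G x2) / (x0 - x2) - (G x1 - G x2) / (x1 - x2)) / (x0 - x1)"
          using n01 n02 n12 by (simp add: dd_dist G_def)
        also have "\<dots> = ((G x0 - G x1) / (x0 - x1) - (G x2 - G x1) / (x2 - x1)) / (x0 - x2)"
          using n01 n02 n12 by (rule alg3)
        also have "\<dots> = dd f (x0 # x2 # x1 # T)"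
          using n01 n02 n12 by (simp add: dd_dist G_def)
        finally show ?thesis .
      qed
    qed
  qed
qed

lemma swap_gen:
  "smooth n f \<Longrightarrow> length (P @ x # y # T) \<le> n + 1 \<Longrightarrow> dd f (P @ x # y # T) = dd f (P @ y # x # T)"
proof (induction "length P" arbitrary: P rule: less_induct)
  case less
  show ?case
  proof (cases P)
    case Nil then show ?thesis using swap0 by simp
  next
    case (Cons p0 P1)
    show ?thesis
    proof (cases P1)
      case Nil
      then show ?thesis using Cons swap1[OF less.prems(1), of T p0 x y] less.prems(2) by simp
    next
      case (Cons p1 P2)
      have "\<And>\<mu>. dd f (\<mu> # P2 @ x # y # T) = dd f (\<mu> # P2 @ y # x # T)"
        using less.hyps[of "_ # P2"] less.prems \<open>P = p0 # P1\<close> Cons by simp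
      then have e: "(\<lambda>\<mu>. dd f (\<mu> # P2 @ x # y # T)) = (\<lambda>\<mu>. dd f (\<mu> # P2 @ y # x # T))" by (rule ext)
      have "dd f (P @ x # y # T) = DD1 (\<lambda>\<mu>. dd f (\<mu> # P2 @ x # y # T)) p0 p1"
        using \<open>P = p0 # P1\<close> Cons dd_cons2 by simp
      also have "\<dots> = DD1 (\<lambda>\<mu>. dd f (\<mu> # P2 @ y # x # T)) p0 p1" using e by simp
      also have "\<dots> = dd f (P @ y # x # T)"
        using \<open>P = p0 # P1\<close> Cons dd_cons2 by simp
      finally show ?thesis .
    qed
  qed
qed

lemma move:
  "smooth n f \<Longrightarrow> length (P @ B1 @ a # B2) \<le> n + 1 \<Longrightarrow> dd f (P @ B1 @ a # B2) = dd f (P @ a # B1 @ B2)"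
proof (induction B1 arbitrary: P)
  case Nil then show ?case by simp
next
  case (Cons c B1)
  have "dd f (P @ (c # B1) @ a # B2) = dd f ((P @ [c]) @ B1 @ a # B2)" by simp
  also have "\<dots> = dd f ((P @ [c]) @ a # B1 @ B2)" using Cons.IH[of "P @ [c]"] Cons.prems by simp
  also have "\<dots> = dd f (P @ c # a # (B1 @ B2))" by simp
  also have "\<dots> = dd f (P @ a # c # (B1 @ B2))" using swap_gen[OF Cons.prems(1)] Cons.prems(2) by simp
  finally show ?case by simp
qed

lemma perm_gen:
  "smooth n f \<Longrightarrow> mset A = mset B \<Longrightarrow> length (P @ A) \<le> n + 1 \<Longrightarrow> dd f (P @ A) = dd f (P @ B)"
proof (induction A arbitrary: P B)
  case Nil then show ?case by simp
next
  case (Cons a A)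
  have "a \<in> set B" using Cons.prems(2) by (metis list.set_intros(1) set_mset_mset)
  then obtain B1 B2 where B: "B = B1 @ a # B2" by (metis split_list)
  have m: "mset A = mset (B1 @ B2)" using Cons.prems(2) B by simp
  have "dd f (P @ a # A) = dd f ((P @ [a]) @ A)" by simp
  also have "\<dots> = dd f ((P @ [a]) @ B1 @ B2)" using Cons.IH[where P="P @ [a]" and B="B1 @ B2"] Cons.prems(1,3) m by simp
  also have "\<dots> = dd f (P @ B1 @ a # B2)"
    using move[OF Cons.prems(1), of P B1 a B2] Cons.prems(3) m
    by (simp add: mset_eq_length[OF m])
  finally show ?case using B by simp
qed

lemma perm: "smooth n f \<Longrightarrow> mset A = mset B \<Longrightarrow> length A \<le> n + 1 \<Longrightarrow> dd f A = dd f B"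
  using perm_gen[of n f A B "[]"] by simp

definition Tsum :: "(nat \<Rightarrow> nat \<Rightarrow> real) \<Rightarrow> real \<Rightarrow> real \<Rightarrow> nat \<Rightarrow> nat \<Rightarrow> nat \<Rightarrow> real" where
  "Tsum \<Phi> u v A B r = (\<Sum>l<A. real ((B + l - 1) choose l) * u ^ B * v ^ l * \<Phi> (A - l) (r + B + l))"

lemma Tsum_A0: "Tsum \<Phi> u v 0 B r = 0" by (simp add: Tsum_def)

lemma Tsum_B0: assumes "0 < A" shows "Tsum \<Phi> u v A 0 r = \<Phi> A r"
proof -
  obtain A' where A: "A = Suc A'" using assms by (cases A) auto
  show ?thesis unfolding Tsum_def A sum.lessThan_Suc_shift by (simp add: binomial_eq_0)
qed

lemma Tsum_rec:
  "Tsum \<Phi> u v (Suc A) (Suc B) r = u * Tsum \<Phi> u v (Suc A) B (Suc r) + v * Tsum \<Phi> u v A (Suc B) (Suc r)"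
proof -
  define h1 where "h1 l = u * (real ((B + l) choose Suc l) * u ^ B * v ^ Suc l * \<Phi> (A - l) (Suc r + B + Suc l))" for l
  define h2 where "h2 l = v * (real ((B + l) choose l) * u ^ Suc B * v ^ l * \<Phi> (A - l) (Suc r + Suc B + l))" for l
  have "Tsum \<Phi> u v (Suc A) (Suc B) r = real (B choose 0) * u ^ Suc B * \<Phi> (Suc A) (r + Suc B)
      + (\<Sum>l<A. h1 l + h2 l)"
    unfolding Tsum_def sum.lessThan_Suc_shift
  proof (intro arg_cong2[where f="(+)"] sum.cong refl)
    show "real ((Suc B + 0 - 1) choose 0) * u ^ Suc B * v ^ 0 * \<Phi> (Suc A - 0) (r + Suc B + 0) =
      real (B choose 0) * u ^ Suc B * \<Phi> (Suc A) (r + Suc B)" by simp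
    fix l assume "l \<in> {..<A}"
    have "(Suc B + Suc l - 1) choose Suc l = ((B + l) choose l) + ((B + l) choose Suc l)"
      by simp
    then show "real ((Suc B + Suc l - 1) choose Suc l) * u ^ Suc B * v ^ Suc l * \<Phi> (Suc A - Suc l) (r + Suc B + Suc l) =
      h1 l + h2 l"
      unfolding h1_def h2_def by (simp add: algebra_simps)
  qed
  also have "\<dots> = u * Tsum \<Phi> u v (Suc A) B (Suc r) + v * Tsum \<Phi> u v A (Suc B) (Suc r)"
    unfolding Tsum_def sum.lessThan_Suc_shift sum.distrib h1_def h2_def
    by (simp add: algebra_simps sum_distrib_left)
  finally show ?thesis .
qed

lemma dd_k: "(x - y) * dd f (x # y # S) = dd f (x # S) - dd f (y # S)"
  by (cases "x = y") (simp_all add: dd_dist)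

lemma rec_step:
  assumes "a \<noteq> b"
  shows "dd f (a # b # S) = (a - \<xi>) / (a - b) * dd f (a # \<xi> # S) + (\<xi> - b) / (a - b) * dd f (\<xi> # b # S)"
proof -
  have "dd f (a # b # S) = (dd f (a # S) - dd f (b # S)) / (a - b)" using assms by (rule dd_dist)
  also have "dd f (a # S) - dd f (b # S) = (a - \<xi>) * dd f (a # \<xi> # S) + (\<xi> - b) * dd f (\<xi> # b # S)"
    unfolding dd_k by simp
  finally show ?thesis by (simp add: add_divide_distrib)
qed

lemma main_gen:
  fixes a b \<xi> :: real and R :: "real list"
  assumes sm: "smooth n f" and ab: "a \<noteq> b"
  shows "1 \<le> A + B \<Longrightarrow> A + B + r + length R \<le> n + 1 \<Longrightarrow>
    dd f (replicate A a @ replicate B b @ replicate r \<xi> @ R) =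
      Tsum (\<lambda>p s. dd f (replicate p a @ replicate 0 b @ replicate s \<xi> @ R)) ((a - \<xi>) / (a - b)) ((\<xi> - b) / (a - b)) A B r
    + Tsum (\<lambda>q s. dd f (replicate 0 a @ replicate q b @ replicate s \<xi> @ R)) ((\<xi> - b) / (a - b)) ((a - \<xi>) / (a - b)) B A r"
proof (induction "A + B" arbitrary: A B r rule: less_induct)
  case less
  define F where "F p q s = dd f (replicate p a @ replicate q b @ replicate s \<xi> @ R)" for p q s
  define u where "u = (a - \<xi>) / (a - b)"
  define v where "v = (\<xi> - b) / (a - b)"
  define \<Phi>1 where "\<Phi>1 = (\<lambda>p s. F p 0 s)"
  define \<Phi>2 where "\<Phi>2 = (\<lambda>q s. F 0 q s)"
  have goal: "F A B r = Tsum \<Phi>1 u v A B r + Tsum \<Phi>2 v u B A r"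
  proof (cases "A = 0")
    case True
    then have "0 < B" using less.prems by simp
    then show ?thesis using True by (simp add: Tsum_A0 Tsum_B0 \<Phi>2_def)
  next
    case A: False
    show ?thesis
    proof (cases "B = 0")
      case True
      then show ?thesis using A by (simp add: Tsum_A0 Tsum_B0 \<Phi>1_def)
    next
      case B: False
      obtain A' B' where AB: "A = Suc A'" "B = Suc B'" using A B by (cases A; cases B) auto
      define S where "S = replicate A' a @ replicate B' b @ replicate r \<xi> @ R"
      have lenS: "length (a # b # S) \<le> n + 1" using less.prems AB by (simp add: S_def)
      have e1: "F A B r = dd f (a # b # S)"
        unfolding F_def S_def AB by (rule perm[OF sm]) (use lenS AB S_def in auto)
      have e2: "F A B' (Suc r) = dd f (a # \<xi> # S)"
        unfolding F_def S_def AB by (rule perm[OF sm]) (use lenS AB S_def in auto)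
      have e3: "F A' B (Suc r) = dd f (\<xi> # b # S)"
        unfolding F_def S_def AB by (rule perm[OF sm]) (use lenS AB S_def in auto)
      have rec: "F A B r = u * F A B' (Suc r) + v * F A' B (Suc r)"
        unfolding e1 e2 e3 u_def v_def by (rule rec_step[OF ab])
      have ih1: "F A B' (Suc r) = Tsum \<Phi>1 u v A B' (Suc r) + Tsum \<Phi>2 v u B' A (Suc r)"
        using less.hyps[of A B' "Suc r"] less.prems AB
        unfolding F_def \<Phi>1_def \<Phi>2_def u_def v_def by simp
      have ih2: "F A' B (Suc r) = Tsum \<Phi>1 u v A' B (Suc r) + Tsum \<Phi>2 v u B A' (Suc r)"
        using less.hyps[of A' B "Suc r"] less.prems AB
        unfolding F_def \<Phi>1_def \<Phi>2_def u_def v_def by simp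
      show ?thesis using rec ih1 ih2 unfolding AB Tsum_rec by (simp add: algebra_simps)
    qed
  qed
  then show ?case unfolding F_def \<Phi>1_def \<Phi>2_def u_def v_def .
qed

lemma len_concat_rest:
  "length (concat (map (\<lambda>(\<mu>, b). replicate b \<mu>) (map (\<lambda>m. (lam m, \<alpha> m)) xs))) = sum_list (map \<alpha> xs)"
  by (induction xs) auto

lemma len_rest:
  fixes \<alpha> :: "nat \<Rightarrow> nat"
  assumes "i \<le> \<kappa>" "j \<le> \<kappa>" "i \<noteq> j"
  shows "\<alpha> i + \<alpha> j + length (concat (map (\<lambda>(\<mu>, b). replicate b \<mu>) (rest \<kappa> lam \<alpha> i j))) = (\<Sum>m\<le>\<kappa>. \<alpha> m)"
proof -
  have "length (concat (map (\<lambda>(\<mu>, b). replicate b \<mu>) (rest \<kappa> lam \<alpha> i j)))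
      = sum_list (map \<alpha> (filter (\<lambda>m. m \<noteq> i \<and> m \<noteq> j) [0..<Suc \<kappa>]))"
    unfolding rest_def by (rule len_concat_rest)
  also have "\<dots> = sum \<alpha> (set (filter (\<lambda>m. m \<noteq> i \<and> m \<noteq> j) [0..<Suc \<kappa>]))"
    by (rule sum_list_distinct_conv_sum_set) simp
  also have "set (filter (\<lambda>m. m \<noteq> i \<and> m \<noteq> j) [0..<Suc \<kappa>]) = {..\<kappa>} - {i} - {j}"
    by auto
  finally have 1: "length (concat (map (\<lambda>(\<mu>, b). replicate b \<mu>) (rest \<kappa> lam \<alpha> i j))) = sum \<alpha> ({..\<kappa>} - {i} - {j})" .
  have "(\<Sum>m\<le>\<kappa>. \<alpha> m) = \<alpha> i + sum \<alpha> ({..\<kappa>} - {i})"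
    using assms by (intro sum.remove) auto
  also have "sum \<alpha> ({..\<kappa>} - {i}) = \<alpha> j + sum \<alpha> ({..\<kappa>} - {i} - {j})"
    using assms by (intro sum.remove) auto
  finally show ?thesis using 1 by simp
qed

theorem lemma3p1:
  fixes n \<kappa> i j :: nat and f :: "real \<Rightarrow> real" and \<xi> :: real
    and \<alpha> :: "nat \<Rightarrow> nat" and lam :: "nat \<Rightarrow> real"
  assumes "n \<ge> 2" and "C_n n f" and "2 \<le> \<kappa>" and "\<kappa> \<le> n"
    and "(\<Sum>m\<le>\<kappa>. \<alpha> m) \<le> n + 1"
    and "i \<le> \<kappa>" and "j \<le> \<kappa>" and "i \<noteq> j" and "lam i \<noteq> lam j"
    and "\<alpha> i > 0" and "\<alpha> j > 0"
  shows "ddm f ([(lam i, \<alpha> i), (lam j, \<alpha> j)] @ rest \<kappa> lam \<alpha> i j) =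
     (\<Sum>l<\<alpha> i. real ((\<alpha> j + l - 1) choose l)
        * ((lam i - \<xi>) / (lam i - lam j)) ^ \<alpha> j
        * ((\<xi> - lam j) / (lam i - lam j)) ^ l
        * ddm f ([(lam i, \<alpha> i - l), (\<xi>, \<alpha> j + l)] @ rest \<kappa> lam \<alpha> i j))
   + (\<Sum>l<\<alpha> j. real ((\<alpha> i + l - 1) choose l)
        * ((lam i - \<xi>) / (lam i - lam j)) ^ l
        * ((\<xi> - lam j) / (lam i - lam j)) ^ \<alpha> i
        * ddm f ([(\<xi>, \<alpha> i + l), (lam j, \<alpha> j - l)] @ rest \<kappa> lam \<alpha> i j))"
proof -
  define R where "R = concat (map (\<lambda>(\<mu>, b). replicate b \<mu>) (rest \<kappa> lam \<alpha> i j))"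
  define A where "A = \<alpha> i"
  define B where "B = \<alpha> j"
  define a where "a = lam i"
  define b where "b = lam j"
  have sm: "smooth n f" using assms(2) by (rule Cn_smooth)
  have len: "A + B + length R \<le> n + 1"
    using len_rest[OF assms(6,7,8), of \<alpha> lam] assms(5) unfolding R_def A_def B_def by simp
  have ab: "a \<noteq> b" using assms(9) by (simp add: a_def b_def)
  have M: "dd f (replicate A a @ replicate B b @ replicate 0 \<xi> @ R) =
      Tsum (\<lambda>p s. dd f (replicate p a @ replicate 0 b @ replicate s \<xi> @ R)) ((a - \<xi>) / (a - b)) ((\<xi> - b) / (a - b)) A B 0
    + Tsum (\<lambda>q s. dd f (replicate 0 a @ replicate q b @ replicate s \<xi> @ R)) ((\<xi> - b) / (a - b)) ((a - \<xi>) / (a - b)) B A 0"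
    using main_gen[OF sm ab, of A B 0 R \<xi>] len assms(10) by (simp add: A_def)
  have L: "ddm f ([(lam i, \<alpha> i), (lam j, \<alpha> j)] @ rest \<kappa> lam \<alpha> i j) = dd f (replicate A a @ replicate B b @ replicate 0 \<xi> @ R)"
    by (simp add: ddm_def R_def A_def B_def a_def b_def)
  have S1: "Tsum (\<lambda>p s. dd f (replicate p a @ replicate 0 b @ replicate s \<xi> @ R)) ((a - \<xi>) / (a - b)) ((\<xi> - b) / (a - b)) A B 0
     = (\<Sum>l<\<alpha> i. real ((\<alpha> j + l - 1) choose l)
        * ((lam i - \<xi>) / (lam i - lam j)) ^ \<alpha> j
        * ((\<xi> - lam j) / (lam i - lam j)) ^ l
        * ddm f ([(lam i, \<alpha> i - l), (\<xi>, \<alpha> j + l)] @ rest \<kappa> lam \<alpha> i j))"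
    unfolding Tsum_def by (simp add: ddm_def R_def A_def B_def a_def b_def)
  have S2: "Tsum (\<lambda>q s. dd f (replicate 0 a @ replicate q b @ replicate s \<xi> @ R)) ((\<xi> - b) / (a - b)) ((a - \<xi>) / (a - b)) B A 0
     = (\<Sum>l<\<alpha> j. real ((\<alpha> i + l - 1) choose l)
        * ((lam i - \<xi>) / (lam i - lam j)) ^ l
        * ((\<xi> - lam j) / (lam i - lam j)) ^ \<alpha> i
        * ddm f ([(\<xi>, \<alpha> i + l), (lam j, \<alpha> j - l)] @ rest \<kappa> lam \<alpha> i j))"
    unfolding Tsum_def
  proof (rule sum.cong)
    show "{..<B} = {..<\<alpha> j}" by (simp add: B_def)
  next
    fix l assume l: "l \<in> {..<\<alpha> j}"
    have "dd f (replicate 0 a @ replicate (B - l) b @ replicate (0 + A + l) \<xi> @ R)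
        = dd f (replicate (A + l) \<xi> @ replicate (B - l) b @ R)"
      by (rule perm[OF sm]) (use l len B_def in auto)
    also have "\<dots> = ddm f ([(\<xi>, \<alpha> i + l), (lam j, \<alpha> j - l)] @ rest \<kappa> lam \<alpha> i j)"
      by (simp add: ddm_def R_def A_def B_def b_def)
    finally show "real ((A + l - 1) choose l) * ((\<xi> - b) / (a - b)) ^ A * ((a - \<xi>) / (a - b)) ^ l *
        dd f (replicate 0 a @ replicate (B - l) b @ replicate (0 + A + l) \<xi> @ R) =
      real ((\<alpha> i + l - 1) choose l) * ((lam i - \<xi>) / (lam i - lam j)) ^ l *
        ((\<xi> - lam j) / (lam i - lam j)) ^ \<alpha> i *
        ddm f ([(\<xi>, \<alpha> i + l), (lam j, \<alpha> j - l)] @ rest \<kappa> lam \<alpha> i j)"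
      by (simp add: A_def a_def b_def)
  qed
  show ?thesis using M L S1 S2 by simp
qed

end
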